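(* Let $\mathcal{X}=\mathbb{R}^N$, let $Q\ge 1$ be an integer, and let $h:\mathcal{X}\times\mathcal{X}\to\mathbb{R}_+$ be a (conditionally) negative definite kernel, with $d$ the distance it induces on measures via $d(\eta_1,\eta_2)^2 = -\frac{1}{2}\int_\mathcal{X}\int_\mathcal{X} h(x,y)\,(\eta_1-\eta_2)(dx)\,(\eta_1-\eta_2)(dy)$ for signed measures $\eta_1,\eta_2$ of equal total mass. Let $\eta$ be a signed measure on $\mathcal{X}$ of finite total variation which belongs to the Hilbert space embedding associated with $h$ (i.e., to the reproducing kernel Hilbert space of the kernel $k_{z_0}(x,y)=\frac{h(x,z_0)+h(y,z_0)-h(x,y)}{2}$, $z_0\in\mathcal{X}$ fixed, via the embedding $\mu\mapsto\int k_{z_0}(x,\cdot)\,\mu(dx)$), and such that $\int\eta(dx)>0$. Suppose: 1. $h(\cdot,\cdot)$ is continuous on $\mathcal{X}\times\mathcal{X}$; 2. there exists a positive (definite) kernel $k$ associated to $h$, in the sense that $h(x,y)=k(x,x)+k(y,y)-2k(x,y)$ for all $x,y\in\mathcal{X}$, such that $\lim_{x\to\infty}k(x,x)=\infty$ and, for every $y\in\mathcal{X}$, there exists $b_y<\infty$ with $|k(x,y)|\le b_y$ for all $x\in\mathcal{X}$; 3. there exists a constant $C_L$ such that $k(x,y)\ge C_L$ for all $x,y\in\mathcal{X}$. Then, writing $\delta_{\alpha,X}:=\sum_{q=1}^Q\alpha_q\delta_{x_q}$, the minimization problem $$\inf_{X=(x_q)_{q=1}^Q\in\mathcal{X}^Q,\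 \alpha=(\alpha_q)_{q=1}^Q\in(\mathbb{R}_+)^Q,\ \sum_q\alpha_q=\int\eta(dx)} d\left(\delta_{\alpha,X},\eta\right)^2$$ admits at least one solution $\alpha^\star\in(\mathbb{R}_+)^Q$, $X^\star\in\mathcal{X}^Q$.
   Context: Measures are finite total variation signed measures on $\mathcal{X}=\mathbb{R}^N$; $\delta_x$ denotes the Dirac mass at $x$. The kernel $k$ induces a Hilbert space structure on measures with $\langle\delta_x,\delta_y\rangle=k(x,y)$ and $\|\eta_1-\eta_2\|=d(\eta_1,\eta_2)$. *)

theory Defs
  imports "HOL-Analysis.Analysis"
begin

definition pos_def_kernel :: "('a \<Rightarrow> 'a \<Rightarrow> real) \<Rightarrow> bool" where
  "pos_def_kernel k \<longleftrightarrow> (\<forall>x y. k x y = k y x) \<and>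
     (\<forall>n (c :: nat \<Rightarrow> real) (x :: nat \<Rightarrow> 'a).
        (\<Sum>i<n. \<Sum>j<n. c i * c j * k (x i) (x j)) \<ge> 0)"

definition cond_neg_def_kernel :: "('a \<Rightarrow> 'a \<Rightarrow> real) \<Rightarrow> bool" where
  "cond_neg_def_kernel h \<longleftrightarrow> (\<forall>x y. h x y = h y x) \<and>
     (\<forall>n (c :: nat \<Rightarrow> real) (x :: nat \<Rightarrow> 'a). (\<Sum>i<n. c i) = 0 \<longrightarrow>
        (\<Sum>i<n. \<Sum>j<n. c i * c j * h (x i) (x j)) \<le> 0)"

definition kz :: "('a \<Rightarrow> 'a \<Rightarrow> real) \<Rightarrow> 'a \<Rightarrow> 'a \<Rightarrow> 'a \<Rightarrow> real" where
  "kz h z0 x y = (h x z0 + h y z0 - h x y) / 2"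

text \<open>A finite-total-variation signed measure is represented as a pair (P, M) of finite
  Borel measures, meaning eta = P - M.\<close>
type_synonym 'a smeasure = "'a measure \<times> 'a measure"

definition smeasure :: "'a::topological_space smeasure \<Rightarrow> bool" where
  "smeasure \<eta> \<longleftrightarrow> sets (fst \<eta>) = sets borel \<and> sets (snd \<eta>) = sets borel \<and>
     finite_measure (fst \<eta>) \<and> finite_measure (snd \<eta>)"

definition smass :: "'a smeasure \<Rightarrow> real" where
  "smass \<eta> = measure (fst \<eta>) (space (fst \<eta>)) - measure (snd \<eta>) (space (snd \<eta>))"

text \<open>Membership in the Hilbert space embedding of h (moment condition
  \<integral> sqrt(k_{z0}(x,x)) |eta|(dx) < \<infinity>, where k_{z0}(x,x) = h(x,z0) when h(x,x)=0).\<close>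
definition in_embedding :: "('a \<Rightarrow> 'a \<Rightarrow> real) \<Rightarrow> 'a \<Rightarrow> 'a smeasure \<Rightarrow> bool" where
  "in_embedding h z0 \<eta> \<longleftrightarrow>
     integrable (fst \<eta>) (\<lambda>x. sqrt (kz h z0 x x)) \<and> integrable (snd \<eta>) (\<lambda>x. sqrt (kz h z0 x x))"

definition dbl_int :: "('a \<Rightarrow> 'a \<Rightarrow> real) \<Rightarrow> 'a measure \<Rightarrow> 'a measure \<Rightarrow> real" where
  "dbl_int K M N = (\<integral>x. (\<integral>y. K x y \<partial>N) \<partial>M)"

definition sinner :: "('a \<Rightarrow> 'a \<Rightarrow> real) \<Rightarrow> 'a smeasure \<Rightarrow> 'a smeasure \<Rightarrow> real" where
  "sinner K \<eta>1 \<eta>2 = dbl_int K (fst \<eta>1) (fst \<eta>2) - dbl_int K (fst \<eta>1) (snd \<eta>2)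
      - dbl_int K (snd \<eta>1) (fst \<eta>2) + dbl_int K (snd \<eta>1) (snd \<eta>2)"

text \<open>Squared distance d(eta1,eta2)^2 = \<parallel>eta1 - eta2\<parallel>^2 in the Hilbert embedding of h
  (for equal masses this is -1/2 \<integral>\<integral> h d(eta1-eta2) d(eta1-eta2)).\<close>
definition dist2 :: "('a \<Rightarrow> 'a \<Rightarrow> real) \<Rightarrow> 'a \<Rightarrow> 'a smeasure \<Rightarrow> 'a smeasure \<Rightarrow> real" where
  "dist2 h z0 \<eta>1 \<eta>2 = sinner (kz h z0) \<eta>1 \<eta>1 - 2 * sinner (kz h z0) \<eta>1 \<eta>2
      + sinner (kz h z0) \<eta>2 \<eta>2"

definition dirac_comb :: "nat \<Rightarrow> (nat \<Rightarrow> real) \<Rightarrow> (nat \<Rightarrow> 'a::topological_space) \<Rightarrow> 'a smeasure" where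
  "dirac_comb Q \<alpha> X =
     (measure_of UNIV (sets borel) (\<lambda>A. \<Sum>q<Q. ennreal (\<alpha> q) * indicator A (X q)),
      null_measure borel)"

end

theory Submission
  imports Defs
begin
lemma dirac_comb_fst_eq:
  fixes X :: "nat \<Rightarrow> 'a::topological_space"
  assumes "\<forall>q<Q. \<alpha> q \<ge> 0"
  shows "fst (dirac_comb Q \<alpha> X) = distr (density (count_space {..<Q}) (\<lambda>q. ennreal (\<alpha> q))) borel X"
proof -
  let ?E = "distr (density (count_space {..<Q}) (\<lambda>q. ennreal (\<alpha> q))) borel X"
  have sp: "space ?E = UNIV" "sets ?E = sets borel" by auto
  have "fst (dirac_comb Q \<alpha> X) = measure_of UNIV (sets borel) (\<lambda>A. \<Sum>q<Q. ennreal (\<alpha> q) * indicator A (X q))"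
    by (simp add: dirac_comb_def)
  also have "\<dots> = measure_of UNIV (sets borel) (emeasure ?E)"
  proof (rule measure_of_eq)
    show "sets borel \<subseteq> Pow UNIV" by auto
    fix a :: "'a set" assume "a \<in> sigma_sets UNIV (sets borel)"
    then have a: "a \<in> sets borel" by (metis sets.sigma_sets_eq space_borel)
    have "emeasure ?E a = emeasure (density (count_space {..<Q}) (\<lambda>q. ennreal (\<alpha> q))) (X -` a \<inter> {..<Q})"
      using a by (subst emeasure_distr) auto
    also have "\<dots> = (\<integral>\<^sup>+ q. ennreal (\<alpha> q) * indicator (X -` a \<inter> {..<Q}) q \<partial>count_space {..<Q})"
      by (subst emeasure_density) auto
    also have "\<dots> = (\<Sum>q<Q. ennreal (\<alpha> q) * indicator (X -` a \<inter> {..<Q}) q)"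
      by (subst nn_integral_count_space_finite) auto
    also have "\<dots> = (\<Sum>q<Q. ennreal (\<alpha> q) * indicator a (X q))"
      by (intro sum.cong) (auto simp: indicator_def)
    finally show "(\<Sum>q<Q. ennreal (\<alpha> q) * indicator a (X q)) = emeasure ?E a" by simp
  qed
  also have "\<dots> = ?E"
    using measure_of_of_measure[of ?E] sp by simp
  finally show ?thesis .
qed

lemma dirac_comb_integral:
  fixes X :: "nat \<Rightarrow> 'a::topological_space" and f :: "'a \<Rightarrow> real"
  assumes "\<forall>q<Q. \<alpha> q \<ge> 0" and f: "f \<in> borel_measurable borel"
  shows "(\<integral>x. f x \<partial>fst (dirac_comb Q \<alpha> X)) = (\<Sum>q<Q. \<alpha> q * f (X q))"
proof -
  have "(\<integral>x. f x \<partial>fst (dirac_comb Q \<alpha> X)) = 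
     (\<integral>x. f x \<partial>distr (density (count_space {..<Q}) (\<lambda>q. ennreal (\<alpha> q))) borel X)"
    by (subst dirac_comb_fst_eq[OF assms(1)]) (rule refl)
  also have "\<dots> = (\<integral>q. f (X q) \<partial>density (count_space {..<Q}) (\<lambda>q. ennreal (\<alpha> q)))"
    by (rule integral_distr) (auto simp: f)
  also have "\<dots> = (\<integral>q. \<alpha> q *\<^sub>R f (X q) \<partial>count_space {..<Q})"
    using assms(1) by (subst integral_density) (auto simp: AE_count_space)
  also have "\<dots> = (\<Sum>q<Q. \<alpha> q * f (X q))"
    by (simp add: lebesgue_integral_count_space_finite)
  finally show ?thesis .
qed

locale kern =
  fixes K :: "'a::euclidean_space \<Rightarrow> 'a \<Rightarrow> real"
  assumes cont: "continuous_on UNIV (\<lambda>(x, y). K x y)"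
    and diag: "\<And>x. K x x \<ge> 0"
    and cs: "\<And>x y. (K x y)\<^sup>2 \<le> K x x * K y y"
    and bdd: "\<And>y. \<exists>b. \<forall>x. \<bar>K x y\<bar> \<le> b"
    and diag_lim: "filterlim (\<lambda>x. K x x) at_top at_infinity"
begin

lemma cs_abs: "\<bar>K x y\<bar> \<le> sqrt (K x x) * sqrt (K y y)"
proof -
  have "\<bar>K x y\<bar> = sqrt ((K x y)\<^sup>2)" by simp
  also have "\<dots> \<le> sqrt (K x x * K y y)" using cs by (rule real_sqrt_le_mono)
  also have "\<dots> = sqrt (K x x) * sqrt (K y y)" by (simp add: real_sqrt_mult)
  finally show ?thesis .
qed

lemma isCont_K: "isCont (\<lambda>(x, y). K x y) p"
  using cont continuous_on_eq_continuous_at open_UNIV by blast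

lemma tendsto_K:
  assumes "(f \<longlongrightarrow> a) F" "(g \<longlongrightarrow> b) F"
  shows "((\<lambda>n. K (f n) (g n)) \<longlongrightarrow> K a b) F"
  using isCont_tendsto_compose[OF isCont_K tendsto_Pair[OF assms]] by simp

lemma cont_K1: "continuous_on UNIV (\<lambda>y. K x y)"
  by (intro continuous_at_imp_continuous_on ballI continuous_at_sequentially[THEN iffD2]) (auto simp: o_def intro!: tendsto_K)

lemma cont_K2: "continuous_on UNIV (\<lambda>x. K x y)"
  by (intro continuous_at_imp_continuous_on ballI continuous_at_sequentially[THEN iffD2]) (auto simp: o_def intro!: tendsto_K)

lemma meas_K1: "sets N = sets borel \<Longrightarrow> (\<lambda>y. K x y) \<in> borel_measurable N"
  using borel_measurable_continuous_onI[OF cont_K1] measurable_cong_sets[of N borel] by auto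

definition gN :: "'a measure \<Rightarrow> 'a \<Rightarrow> real" where
  "gN N x = (\<integral>y. K x y \<partial>N)"

definition cN :: "'a measure \<Rightarrow> real" where
  "cN N = (\<integral>y. sqrt (K y y) \<partial>N)"

context
  fixes N :: "'a measure"
  assumes N_sets: "sets N = sets borel" and N_int: "integrable N (\<lambda>y. sqrt (K y y))"
begin

lemma int_K1: "integrable N (\<lambda>y. K x y)"
proof (rule Bochner_Integration.integrable_bound[where f="\<lambda>y. sqrt (K x x) * sqrt (K y y)"])
  show "integrable N (\<lambda>y. sqrt (K x x) * sqrt (K y y))" using N_int by simp
  show "(\<lambda>y. K x y) \<in> borel_measurable N" by (rule meas_K1[OF N_sets])
  show "AE y in N. norm (K x y) \<le> norm (sqrt (K x x) * sqrt (K y y))"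
    using cs_abs diag by auto
qed

lemma cN_nonneg: "cN N \<ge> 0"
  unfolding cN_def by (rule integral_nonneg_AE) (use diag in auto)

lemma gN_bound: "\<bar>gN N x\<bar> \<le> sqrt (K x x) * cN N"
proof -
  have "\<bar>gN N x\<bar> \<le> (\<integral>y. \<bar>K x y\<bar> \<partial>N)"
    unfolding gN_def using integral_norm_bound[of N "\<lambda>y. K x y"] by simp
  also have "\<dots> \<le> (\<integral>y. sqrt (K x x) * sqrt (K y y) \<partial>N)"
    by (intro integral_mono int_K1 integrable_abs) (use N_int cs_abs in auto)
  also have "\<dots> = sqrt (K x x) * cN N" unfolding cN_def by simp
  finally show ?thesis .
qed

lemma gN_tendsto:
  assumes "xs \<longlonglongrightarrow> x"
  shows "(\<lambda>n. gN N (xs n)) \<longlonglongrightarrow> gN N x"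
proof -
  have "(\<lambda>n. sqrt (K (xs n) (xs n))) \<longlonglongrightarrow> sqrt (K x x)"
    by (intro tendsto_intros tendsto_K assms)
  then have "Bseq (\<lambda>n. sqrt (K (xs n) (xs n)))" by (intro convergent_imp_Bseq convergentI)
  then obtain B where B: "B > 0" "\<And>n. norm (sqrt (K (xs n) (xs n))) \<le> B" unfolding Bseq_def by auto
  show ?thesis unfolding gN_def
  proof (rule integral_dominated_convergence[where w="\<lambda>y. B * sqrt (K y y)"])
    show "(\<lambda>y. K x y) \<in> borel_measurable N" "\<And>n. (\<lambda>y. K (xs n) y) \<in> borel_measurable N"
      by (auto intro!: meas_K1 N_sets)
    show "integrable N (\<lambda>y. B * sqrt (K y y))" using N_int by simp
    show "AE y in N. (\<lambda>n. K (xs n) y) \<longlonglongrightarrow> K x y"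
      by (intro AE_I2 tendsto_K assms tendsto_const)
    fix n
    show "AE y in N. norm (K (xs n) y) \<le> B * sqrt (K y y)"
    proof (intro AE_I2)
      fix y
      have "norm (K (xs n) y) \<le> sqrt (K (xs n) (xs n)) * sqrt (K y y)" using cs_abs by simp
      also have "\<dots> \<le> B * sqrt (K y y)"
        using B(2)[of n] diag by (intro mult_right_mono) auto
      finally show "norm (K (xs n) y) \<le> B * sqrt (K y y)" .
    qed
  qed
qed

lemma gN_cont: "continuous_on UNIV (gN N)"
  by (intro continuous_at_imp_continuous_on ballI continuous_at_sequentially[THEN iffD2])
     (auto simp: o_def intro!: gN_tendsto)

lemma gN_small:
  assumes "\<epsilon> > 0"
  shows "\<exists>R. \<forall>x. norm x \<ge> R \<longrightarrow> \<bar>gN N x\<bar> \<le> \<epsilon> * sqrt (K x x)"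
proof (rule ccontr)
  assume "\<not> ?thesis"
  then have "\<forall>n::nat. \<exists>x. norm x \<ge> real n \<and> \<bar>gN N x\<bar> > \<epsilon> * sqrt (K x x)"
    by (auto simp: not_le)
  then obtain xs where xs: "\<And>n. norm (xs n) \<ge> real n" "\<And>n. \<bar>gN N (xs n)\<bar> > \<epsilon> * sqrt (K (xs n) (xs n))"
    by metis
  define s where "s n = sqrt (K (xs n) (xs n))" for n
  have "filterlim (\<lambda>n. norm (xs n)) at_top sequentially"
    by (rule filterlim_at_top_mono[OF filterlim_real_sequentially]) (use xs(1) in auto)
  then have "filterlim xs at_infinity sequentially"
    by (simp add: filterlim_at_infinity_conv_norm_at_top)
  then have "filterlim (\<lambda>n. K (xs n) (xs n)) at_top sequentially"
    by (rule filterlim_compose[OF diag_lim])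
  then have s_top: "filterlim s at_top sequentially"
    unfolding s_def by (rule filterlim_compose[OF sqrt_at_top])
  have s_pos: "s n > 0" for n
  proof -
    have "\<epsilon> * s n < \<bar>gN N (xs n)\<bar>" using xs(2) s_def by simp
    also have "\<dots> \<le> s n * cN N" using gN_bound s_def by simp
    finally have "\<epsilon> * s n < s n * cN N" .
    moreover have "s n \<ge> 0" unfolding s_def using diag by simp
    ultimately show ?thesis by (cases "s n = 0") auto
  qed
  have lim: "(\<lambda>n. (\<integral>y. K (xs n) y / s n \<partial>N)) \<longlonglongrightarrow> (\<integral>y. 0 \<partial>N)"
  proof (rule integral_dominated_convergence[where w="\<lambda>y. sqrt (K y y)"])
    show "(\<lambda>y. 0::real) \<in> borel_measurable N" by simp
    show "\<And>n. (\<lambda>y. K (xs n) y / s n) \<in> borel_measurable N"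
      by (intro borel_measurable_divide meas_K1 N_sets borel_measurable_const)
    show "integrable N (\<lambda>y. sqrt (K y y))" by (rule N_int)
    show "AE y in N. (\<lambda>n. K (xs n) y / s n) \<longlonglongrightarrow> 0"
    proof (intro AE_I2)
      fix y
      obtain b where b: "\<And>x. \<bar>K x y\<bar> \<le> b" using bdd by metis
      have "(\<lambda>n. b / s n) \<longlonglongrightarrow> 0"
        by (intro tendsto_divide_0[OF tendsto_const] filterlim_at_top_imp_at_infinity s_top)
      then show "(\<lambda>n. K (xs n) y / s n) \<longlonglongrightarrow> 0"
        by (rule Lim_null_comparison[rotated]) (use b s_pos in \<open>auto intro!: always_eventually divide_right_mono simp: abs_of_pos less_imp_le\<close>)
    qed
    fix n
    show "AE y in N. norm (K (xs n) y / s n) \<le> sqrt (K y y)"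
    proof (intro AE_I2)
      fix y
      have "\<bar>K (xs n) y\<bar> \<le> s n * sqrt (K y y)" using cs_abs s_def by simp
      then show "norm (K (xs n) y / s n) \<le> sqrt (K y y)"
        using s_pos[of n] by (simp add: divide_le_eq mult.commute)
    qed
  qed
  then have "(\<lambda>n. gN N (xs n) / s n) \<longlonglongrightarrow> 0" unfolding gN_def by simp
  then have "eventually (\<lambda>n. norm (gN N (xs n) / s n) < \<epsilon>) sequentially"
    using assms by (auto dest: tendstoD simp: dist_norm)
  then obtain n where "\<bar>gN N (xs n) / s n\<bar> < \<epsilon>" by (auto simp: eventually_sequentially)
  then have "\<bar>gN N (xs n)\<bar> < \<epsilon> * s n" using s_pos[of n] by (simp add: abs_div divide_less_eq)
  with xs(2)[of n] show False unfolding s_def by simp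
qed

end

end

lemma extract_subseq:
  fixes f :: "nat \<Rightarrow> nat \<Rightarrow> 'a::metric_space"
  assumes "\<And>q n. q < j \<Longrightarrow> f n q \<in> S q" "\<And>q. q < j \<Longrightarrow> compact (S q)"
  shows "\<exists>r. strict_mono r \<and> (\<forall>q<j. \<exists>l. (\<lambda>n. f (r n) q) \<longlonglongrightarrow> l)"
  using assms
proof (induction j)
  case 0
  show ?case using strict_mono_id by auto
next
  case (Suc j)
  then obtain r where r: "strict_mono r" "\<forall>q<j. \<exists>l. (\<lambda>n. f (r n) q) \<longlonglongrightarrow> l" by auto
  have fj: "\<And>n. f (r n) j \<in> S j" using Suc.prems by auto
  then obtain l r' where r': "strict_mono r'" "((\<lambda>n. f (r n) j) \<circ> r') \<longlonglongrightarrow> l"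
  proof -
    have "compact (S j)" using Suc.prems by simp
    from this[unfolded compact_def, rule_format, of "\<lambda>n. f (r n) j"] fj show ?thesis
      using that by blast
  qed
  have "\<forall>q<Suc j. \<exists>l. (\<lambda>n. f ((r \<circ> r') n) q) \<longlonglongrightarrow> l"
  proof safe
    fix q assume "q < Suc j"
    show "\<exists>l. (\<lambda>n. f ((r \<circ> r') n) q) \<longlonglongrightarrow> l"
    proof (cases "q = j")
      case True then show ?thesis using r' by (auto simp: o_def)
    next
      case False
      then obtain l' where "(\<lambda>n. f (r n) q) \<longlonglongrightarrow> l'" using r \<open>q < Suc j\<close> less_Suc_eq by blast
      from LIMSEQ_subseq_LIMSEQ[OF this r'(1)] show ?thesis by (auto simp: o_def)
    qed
  qed
  then show ?case using strict_mono_o[OF r(1) r'(1)] by blast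
qed

definition lb_seq :: "(nat \<Rightarrow> real) \<Rightarrow> real \<Rightarrow> bool" where
  "lb_seq a L \<longleftrightarrow> (\<forall>\<epsilon>>0. eventually (\<lambda>n. L - \<epsilon> \<le> a n) sequentially)"

lemma lb_seq_tendsto: "a \<longlonglongrightarrow> L \<Longrightarrow> lb_seq a L"
  unfolding lb_seq_def
proof safe
  fix \<epsilon> :: real assume "a \<longlonglongrightarrow> L" "\<epsilon> > 0"
  then have "eventually (\<lambda>n. dist (a n) L < \<epsilon>) sequentially" by (rule tendstoD)
  then show "eventually (\<lambda>n. L - \<epsilon> \<le> a n) sequentially"
    by eventually_elim (auto simp: dist_real_def)
qed

lemma lb_seq_mono: "lb_seq b L \<Longrightarrow> (\<And>n. b n \<le> a n) \<Longrightarrow> lb_seq a L"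
  unfolding lb_seq_def by (metis (mono_tags, lifting) eventually_mono order_trans)

lemma lb_seq_add: "lb_seq a L \<Longrightarrow> lb_seq b M \<Longrightarrow> lb_seq (\<lambda>n. a n + b n) (L + M)"
  unfolding lb_seq_def
proof safe
  fix \<epsilon> :: real assume A: "\<forall>\<epsilon>>0. eventually (\<lambda>n. L - \<epsilon> \<le> a n) sequentially"
    and B: "\<forall>\<epsilon>>0. eventually (\<lambda>n. M - \<epsilon> \<le> b n) sequentially" and e: "\<epsilon> > 0"
  have "eventually (\<lambda>n. L - \<epsilon>/2 \<le> a n) sequentially" "eventually (\<lambda>n. M - \<epsilon>/2 \<le> b n) sequentially"
    using A B e by auto
  then show "eventually (\<lambda>n. L + M - \<epsilon> \<le> a n + b n) sequentially"
    by eventually_elim auto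
qed

lemma lb_seq_sum:
  assumes "finite I" "\<And>i. i \<in> I \<Longrightarrow> lb_seq (a i) (L i)"
  shows "lb_seq (\<lambda>n. \<Sum>i\<in>I. a i n) (\<Sum>i\<in>I. L i)"
  using assms
proof (induction I rule: finite_induct)
  case empty
  then show ?case by (simp add: lb_seq_def)
next
  case (insert x F)
  then show ?case by (simp add: lb_seq_add)
qed

lemma lb_seq_le:
  assumes "lb_seq a L" "\<And>\<epsilon>. \<epsilon> > 0 \<Longrightarrow> eventually (\<lambda>n. a n < v + \<epsilon>) sequentially"
  shows "L \<le> v"
proof (rule ccontr)
  assume "\<not> L \<le> v"
  then have e: "(L - v) / 2 > 0" by simp
  have "eventually (\<lambda>n. L - (L - v)/2 \<le> a n) sequentially" using assms(1) e unfolding lb_seq_def by blast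
  moreover have "eventually (\<lambda>n. a n < v + (L - v)/2) sequentially" using assms(2) e by blast
  ultimately have "eventually (\<lambda>n. False) sequentially" by eventually_elim (simp add: field_simps)
  then show False by simp
qed

locale kern2 = kern K for K :: "'a::euclidean_space \<Rightarrow> 'a \<Rightarrow> real" +
  fixes C c :: real and g :: "'a \<Rightarrow> real"
  assumes lower: "\<And>x y. K x y \<ge> C"
    and g_cont: "continuous_on UNIV g"
    and g_bound: "\<And>x. \<bar>g x\<bar> \<le> sqrt (K x x) * c"
    and c_nonneg: "c \<ge> 0"
    and g_small: "\<And>\<epsilon>. \<epsilon> > 0 \<Longrightarrow> \<exists>R. \<forall>x. norm x \<ge> R \<longrightarrow> \<bar>g x\<bar> \<le> \<epsilon> * sqrt (K x x)"
begin

definition F :: "nat \<Rightarrow> (nat \<Rightarrow> real) \<Rightarrow> (nat \<Rightarrow> 'a) \<Rightarrow> real" where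
  "F Q \<alpha> X = (\<Sum>p<Q. \<Sum>q<Q. \<alpha> p * \<alpha> q * K (X p) (X q)) - 2 * (\<Sum>q<Q. \<alpha> q * g (X q))"

definition T1 :: "real \<Rightarrow> 'a \<Rightarrow> real" where
  "T1 a x = a\<^sup>2 * K x x - 2 * a * g x"

lemma T1_lower_gen:
  assumes "a \<ge> 0" "\<bar>g x\<bar> \<le> sqrt (K x x) * e"
  shows "T1 a x \<ge> - e\<^sup>2"
proof -
  define u where "u = sqrt (K x x)"
  have Ku: "K x x = u\<^sup>2" unfolding u_def using diag by simp
  have "a * g x \<le> a * (u * e)" using assms unfolding u_def by (intro mult_left_mono) auto
  then have "T1 a x \<ge> (a * u)\<^sup>2 - 2 * (a * u) * e" unfolding T1_def Ku by (simp add: power_mult_distrib algebra_simps)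
  moreover have "(a * u)\<^sup>2 - 2 * (a * u) * e = (a * u - e)\<^sup>2 - e\<^sup>2" by (simp add: power2_eq_square algebra_simps)
  moreover have "(a * u - e)\<^sup>2 \<ge> 0" by simp
  ultimately show ?thesis by linarith
qed

lemma T1_lower: "a \<ge> 0 \<Longrightarrow> T1 a x \<ge> - c\<^sup>2"
  using T1_lower_gen g_bound by blast

lemma T1_coercive:
  assumes "0 < a0" "a0 \<le> a" "T1 a x \<le> T"
  shows "K x x \<le> ((c + sqrt (T + c\<^sup>2)) / a0)\<^sup>2"
proof -
  define u where "u = sqrt (K x x)"
  have u0: "u \<ge> 0" unfolding u_def using diag by simp
  have Ku: "K x x = u\<^sup>2" unfolding u_def using diag by simp
  have "a * g x \<le> a * (u * c)" using assms g_bound[of x] unfolding u_def by (intro mult_left_mono) auto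
  then have "T1 a x \<ge> (a * u)\<^sup>2 - 2 * (a * u) * c" unfolding T1_def Ku by (simp add: power_mult_distrib algebra_simps)
  moreover have "(a * u)\<^sup>2 - 2 * (a * u) * c = (a * u - c)\<^sup>2 - c\<^sup>2" by (simp add: power2_eq_square algebra_simps)
  ultimately have "(a * u - c)\<^sup>2 \<le> T + c\<^sup>2" using assms by linarith
  then have "a * u - c \<le> sqrt (T + c\<^sup>2)" by (rule real_le_rsqrt)
  then have "a * u \<le> c + sqrt (T + c\<^sup>2)" by simp
  moreover have "a0 * u \<le> a * u" using assms u0 by (intro mult_right_mono) auto
  ultimately have "a0 * u \<le> c + sqrt (T + c\<^sup>2)" by linarith
  then have "u \<le> (c + sqrt (T + c\<^sup>2)) / a0" using assms by (simp add: field_simps mult.commute)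
  then have "u\<^sup>2 \<le> ((c + sqrt (T + c\<^sup>2)) / a0)\<^sup>2" using u0 by (intro power_mono) auto
  then show ?thesis using Ku by simp
qed

lemma F_split:
  "F Q \<alpha> X = (\<Sum>q<Q. T1 (\<alpha> q) (X q)) + (\<Sum>p<Q. \<Sum>q\<in>{..<Q}-{p}. \<alpha> p * \<alpha> q * K (X p) (X q))"
proof -
  have "\<And>p. p < Q \<Longrightarrow> (\<Sum>q<Q. \<alpha> p * \<alpha> q * K (X p) (X q)) =
      \<alpha> p * \<alpha> p * K (X p) (X p) + (\<Sum>q\<in>{..<Q}-{p}. \<alpha> p * \<alpha> q * K (X p) (X q))"
    by (subst sum.remove[of _ p]) auto
  then have "(\<Sum>p<Q. \<Sum>q<Q. \<alpha> p * \<alpha> q * K (X p) (X q)) =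
      (\<Sum>p<Q. \<alpha> p * \<alpha> p * K (X p) (X p) + (\<Sum>q\<in>{..<Q}-{p}. \<alpha> p * \<alpha> q * K (X p) (X q)))"
    by (intro sum.cong) auto
  then show ?thesis
    unfolding F_def T1_def by (simp add: sum.distrib sum_subtractf sum_distrib_left power2_eq_square algebra_simps)
qed

lemma cross_lower:
  fixes Q :: nat
  assumes "\<forall>q<Q. \<alpha> q \<ge> 0"
  shows "(\<Sum>p<Q. \<Sum>q\<in>{..<Q}-{p}. \<alpha> p * \<alpha> q * K (X p) (X q)) \<ge> - \<bar>C\<bar> * (\<Sum>q<Q. \<alpha> q)\<^sup>2"
proof -
  have h1: "(\<Sum>p<Q. \<Sum>q\<in>{..<Q}-{p}. \<alpha> p * \<alpha> q * K (X p) (X q)) \<ge>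
      (\<Sum>p<Q. \<Sum>q\<in>{..<Q}-{p}. - \<bar>C\<bar> * (\<alpha> p * \<alpha> q))"
  proof (intro sum_mono)
    fix p q assume "p \<in> {..<Q}" "q \<in> {..<Q} - {p}"
    then have "\<alpha> p * \<alpha> q \<ge> 0" using assms by auto
    moreover have "K (X p) (X q) \<ge> - \<bar>C\<bar>" using lower[of "X p" "X q"] by linarith
    ultimately show "- \<bar>C\<bar> * (\<alpha> p * \<alpha> q) \<le> \<alpha> p * \<alpha> q * K (X p) (X q)"
      by (metis mult.commute mult_left_mono)
  qed
  have h2: "(\<Sum>p<Q. \<Sum>q\<in>{..<Q}-{p}. \<alpha> p * \<alpha> q) \<le> (\<Sum>p<Q. \<Sum>q<Q. \<alpha> p * \<alpha> q)"
    by (intro sum_mono sum_mono2) (use assms in \<open>auto intro!: mult_nonneg_nonneg\<close>)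
  have h3: "(\<Sum>p<Q. \<Sum>q<Q. \<alpha> p * \<alpha> q) = (\<Sum>q<Q. \<alpha> q)\<^sup>2"
    by (simp add: power2_eq_square sum_product)
  have h4: "(\<Sum>p<Q. \<Sum>q\<in>{..<Q}-{p}. - \<bar>C\<bar> * (\<alpha> p * \<alpha> q)) = - \<bar>C\<bar> * (\<Sum>p<Q. \<Sum>q\<in>{..<Q}-{p}. \<alpha> p * \<alpha> q)"
    by (simp add: sum_distrib_left)
  have h5: "\<bar>C\<bar> * (\<Sum>p<Q. \<Sum>q\<in>{..<Q}-{p}. \<alpha> p * \<alpha> q) \<le> \<bar>C\<bar> * (\<Sum>q<Q. \<alpha> q)\<^sup>2"
    using h2 h3 by (intro mult_left_mono) auto
  show ?thesis using h1 h4 h5 by linarith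
qed

lemma F_lower:
  fixes Q :: nat
  assumes "\<forall>q<Q. \<alpha> q \<ge> 0" "q0 < Q"
  shows "F Q \<alpha> X \<ge> T1 (\<alpha> q0) (X q0) - real Q * c\<^sup>2 - \<bar>C\<bar> * (\<Sum>q<Q. \<alpha> q)\<^sup>2"
proof -
  have "(\<Sum>q<Q. T1 (\<alpha> q) (X q)) = T1 (\<alpha> q0) (X q0) + (\<Sum>q\<in>{..<Q}-{q0}. T1 (\<alpha> q) (X q))"
    using assms by (subst sum.remove[of _ q0]) auto
  moreover have "(\<Sum>q\<in>{..<Q}-{q0}. T1 (\<alpha> q) (X q)) \<ge> (\<Sum>q\<in>{..<Q}-{q0}. - c\<^sup>2)"
    by (intro sum_mono T1_lower) (use assms in auto)
  moreover have "(\<Sum>q\<in>{..<Q}-{q0}. - c\<^sup>2) \<ge> - real Q * c\<^sup>2"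
  proof -
    have "card ({..<Q}-{q0}) \<le> Q" by (metis card_Diff1_le card_lessThan finite_lessThan)
    then have "real (card ({..<Q}-{q0})) * c\<^sup>2 \<le> real Q * c\<^sup>2" by (intro mult_right_mono) auto
    then show ?thesis by simp
  qed
  ultimately show ?thesis using F_split[of Q \<alpha> X] cross_lower[OF assms(1), of X] by linarith
qed

end

context kern2 begin

lemma T1_tendsto:
  assumes "a \<longlonglongrightarrow> a'" "xs \<longlonglongrightarrow> x"
  shows "(\<lambda>n. T1 (a n) (xs n)) \<longlonglongrightarrow> T1 a' x"
proof -
  have "isCont g x" using g_cont continuous_on_eq_continuous_at open_UNIV by blast
  then have "(\<lambda>n. g (xs n)) \<longlonglongrightarrow> g x" using assms(2) isCont_tendsto_compose by blast
  then show ?thesis unfolding T1_def by (intro tendsto_intros tendsto_K assms)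
qed

lemma T1_bad:
  assumes "a \<longlonglongrightarrow> 0" "\<And>n. a n \<ge> 0"
  shows "lb_seq (\<lambda>n. T1 (a n) (xs n)) 0"
  unfolding lb_seq_def
proof safe
  fix \<epsilon> :: real assume e: "\<epsilon> > 0"
  obtain R0 where R0: "\<And>x. norm x \<ge> R0 \<Longrightarrow> \<bar>g x\<bar> \<le> sqrt \<epsilon> * sqrt (K x x)"
    using g_small[of "sqrt \<epsilon>"] e by auto
  have "compact (g ` cball 0 R0)"
    by (intro compact_continuous_image continuous_on_subset[OF g_cont]) auto
  then obtain M where M: "M > 0" "\<And>x. x \<in> cball 0 R0 \<Longrightarrow> norm (g x) \<le> M"
    using compact_imp_bounded bounded_pos by (metis image_eqI)
  have "eventually (\<lambda>n. a n < \<epsilon> / (2 * M)) sequentially"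
    using order_tendstoD(2)[OF assms(1)] e M by simp
  then show "eventually (\<lambda>n. 0 - \<epsilon> \<le> T1 (a n) (xs n)) sequentially"
  proof eventually_elim
    case (elim n)
    show ?case
    proof (cases "norm (xs n) \<ge> R0")
      case True
      then have "\<bar>g (xs n)\<bar> \<le> sqrt (K (xs n) (xs n)) * sqrt \<epsilon>" using R0 by (simp add: mult.commute)
      from T1_lower_gen[OF assms(2) this] show ?thesis using e by simp
    next
      case False
      then have "norm (g (xs n)) \<le> M" using M by auto
      then have "a n * g (xs n) \<le> a n * M" using assms(2)[of n] by (intro mult_left_mono) auto
      also have "\<dots> \<le> \<epsilon> / 2" using elim M assms(2)[of n] by (simp add: field_simps)
      finally have "2 * a n * g (xs n) \<le> \<epsilon>" by simp
      moreover have "(a n)\<^sup>2 * K (xs n) (xs n) \<ge> 0" using diag by simp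
      ultimately show ?thesis unfolding T1_def by linarith
    qed
  qed
qed

lemma cross_bad:
  assumes "a \<longlonglongrightarrow> a'" "b \<longlonglongrightarrow> b'" "\<And>n. a n \<ge> 0" "\<And>n. b n \<ge> 0" "a' * b' = 0"
  shows "lb_seq (\<lambda>n. a n * b n * K (xs n) (ys n)) (a' * b' * K x y)"
proof -
  have "lb_seq (\<lambda>n. - \<bar>C\<bar> * (a n * b n)) 0"
    using lb_seq_tendsto[OF tendsto_mult[OF tendsto_const tendsto_mult[OF assms(1,2)]], of "- \<bar>C\<bar>"] assms(5)
    by simp
  then have L0: "lb_seq (\<lambda>n. a n * b n * K (xs n) (ys n)) 0"
  proof (rule lb_seq_mono)
    fix n
    have "a n * b n \<ge> 0" using assms by auto
    moreover have "K (xs n) (ys n) \<ge> - \<bar>C\<bar>" using lower[of "xs n" "ys n"] by linarith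
    ultimately show "- \<bar>C\<bar> * (a n * b n) \<le> a n * b n * K (xs n) (ys n)"
      by (metis mult.commute mult_left_mono)
  qed
  have e: "a' * b' * K x y = 0" using assms(5) by simp
  show ?thesis unfolding e by (rule L0)
qed

end

context kern2 begin

lemma exists_min:
  fixes Q :: nat and m :: real
  assumes Q: "Q \<ge> 1" and m: "m \<ge> 0"
  shows "\<exists>\<alpha> X. (\<forall>q<Q. \<alpha> q \<ge> 0) \<and> (\<Sum>q<Q. \<alpha> q) = m \<and>
     (\<forall>\<beta> Y. (\<forall>q<Q. \<beta> q \<ge> 0) \<and> (\<Sum>q<Q. \<beta> q) = m \<longrightarrow> F Q \<alpha> X \<le> F Q \<beta> Y)"
proof -
  define V where "V = {F Q \<alpha> X | \<alpha> X. (\<forall>q<Q. \<alpha> q \<ge> 0) \<and> (\<Sum>q<Q. \<alpha> q) = m}"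
  define B where "B = - c\<^sup>2 - real Q * c\<^sup>2 - \<bar>C\<bar> * m\<^sup>2"
  have Vlow: "B \<le> z" if zV: "z \<in> V" for z
  proof -
    obtain \<alpha> X where z: "z = F Q \<alpha> X" "\<forall>q<Q. \<alpha> q \<ge> 0" "(\<Sum>q<Q. \<alpha> q) = m"
      using zV[unfolded V_def] by blast
    have "F Q \<alpha> X \<ge> T1 (\<alpha> 0) (X 0) - real Q * c\<^sup>2 - \<bar>C\<bar> * m\<^sup>2"
      using F_lower[OF z(2), of 0 X] Q z(3) by simp
    moreover have "T1 (\<alpha> 0) (X 0) \<ge> - c\<^sup>2" using T1_lower z(2) Q by simp
    ultimately show ?thesis unfolding B_def z(1) by linarith
  qed
  have bdd: "bdd_below V" using Vlow by (auto simp: bdd_below_def)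
  define \<alpha>0 where "\<alpha>0 = (\<lambda>q::nat. if q = 0 then m else 0)"
  have adm0: "(\<forall>q<Q. \<alpha>0 q \<ge> 0) \<and> (\<Sum>q<Q. \<alpha>0 q) = m"
    using Q m unfolding \<alpha>0_def by (auto simp: sum.delta')
  then have Vne: "V \<noteq> {}" unfolding V_def by blast
  define v where "v = Inf V"
  have v_le: "v \<le> F Q \<beta> Y" if "\<forall>q<Q. \<beta> q \<ge> 0" "(\<Sum>q<Q. \<beta> q) = m" for \<beta> Y
    unfolding v_def by (rule cInf_lower) (use that bdd in \<open>auto simp: V_def\<close>)
  have "\<forall>n::nat. \<exists>\<alpha> X. ((\<forall>q<Q. \<alpha> q \<ge> 0) \<and> (\<Sum>q<Q. \<alpha> q) = m) \<and> F Q \<alpha> X < v + 1 / real (Suc n)"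
  proof
    fix n :: nat
    have "Inf V < v + 1 / real (Suc n)" unfolding v_def by simp
    from cInf_lessD[OF Vne this] show "\<exists>\<alpha> X. ((\<forall>q<Q. \<alpha> q \<ge> 0) \<and> (\<Sum>q<Q. \<alpha> q) = m) \<and> F Q \<alpha> X < v + 1 / real (Suc n)"
      unfolding V_def by auto
  qed
  then obtain A Xs where AX: "\<And>n. \<forall>q<Q. A n q \<ge> 0" "\<And>n. (\<Sum>q<Q. A n q) = m"
    "\<And>n. F Q (A n) (Xs n) < v + 1 / real (Suc n)"
    by metis
  have A_le: "A n q \<le> m" if "q < Q" for n q
    using member_le_sum[of q "{..<Q}" "A n"] AX(1)[of n] AX(2)[of n] that by auto
  obtain r1 where r1: "strict_mono r1" "\<forall>q<Q. \<exists>l. (\<lambda>n. A (r1 n) q) \<longlonglongrightarrow> l"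
    using extract_subseq[of Q A "\<lambda>_. {0..m}"] AX(1) A_le by auto
  then obtain L where L: "\<And>q. q < Q \<Longrightarrow> (\<lambda>n. A (r1 n) q) \<longlonglongrightarrow> L q" by metis
  have L_nonneg: "L q \<ge> 0" if "q < Q" for q
    using LIMSEQ_le_const[OF L[OF that], of 0] AX(1) that by auto
  have L_sum: "(\<Sum>q<Q. L q) = m"
  proof -
    have "(\<lambda>n. \<Sum>q<Q. A (r1 n) q) \<longlonglongrightarrow> (\<Sum>q<Q. L q)" by (intro tendsto_sum L) auto
    then have "(\<lambda>n. m) \<longlonglongrightarrow> (\<Sum>q<Q. L q)" using AX(2) by simp
    then show ?thesis using LIMSEQ_unique tendsto_const by blast
  qed
  define G where "G = {q. q < Q \<and> L q > 0}"
  define T where "T = v + 1 + real Q * c\<^sup>2 + \<bar>C\<bar> * m\<^sup>2"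
  have T1_le: "T1 (A n q) (Xs n q) \<le> T" if "q < Q" for n q
  proof -
    have "F Q (A n) (Xs n) \<ge> T1 (A n q) (Xs n q) - real Q * c\<^sup>2 - \<bar>C\<bar> * m\<^sup>2"
      using F_lower[OF AX(1) that] AX(2) by simp
    moreover have "1 / real (Suc n) \<le> 1" by simp
    ultimately show ?thesis using AX(3)[of n] unfolding T_def by linarith
  qed
  have bound: "\<exists>R. eventually (\<lambda>n. norm (Xs (r1 n) q) \<le> R) sequentially" if "q \<in> G" for q
  proof -
    have q: "q < Q" "L q > 0" using that unfolding G_def by auto
    define a0 where "a0 = L q / 2"
    have a0: "a0 > 0" "a0 < L q" using q unfolding a0_def by auto
    define U where "U = ((c + sqrt (T + c\<^sup>2)) / a0)\<^sup>2"
    have "eventually (\<lambda>x. U + 1 \<le> K x x) at_infinity"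
      using diag_lim unfolding filterlim_at_top by blast
    then obtain R where R: "\<And>x. R \<le> norm x \<Longrightarrow> U + 1 \<le> K x x"
      unfolding eventually_at_infinity by blast
    have "eventually (\<lambda>n. a0 < A (r1 n) q) sequentially"
      using order_tendstoD(1)[OF L[OF q(1)] a0(2)] .
    then have "eventually (\<lambda>n. norm (Xs (r1 n) q) \<le> R) sequentially"
    proof eventually_elim
      case (elim n)
      have "K (Xs (r1 n) q) (Xs (r1 n) q) \<le> U"
        unfolding U_def using T1_coercive[OF a0(1) _ T1_le[OF q(1)]] elim by simp
      then show ?case using R[of "Xs (r1 n) q"] by linarith
    qed
    then show ?thesis by blast
  qed
  then obtain R where R: "\<And>q. q \<in> G \<Longrightarrow> eventually (\<lambda>n. norm (Xs (r1 n) q) \<le> R q) sequentially"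
    by metis
  define Yv where "Yv n q = (if q \<in> G \<and> norm (Xs (r1 n) q) \<le> R q then Xs (r1 n) q else 0)" for n q
  have Yv_in: "Yv n q \<in> cball 0 \<bar>R q\<bar>" for n q unfolding Yv_def by auto
  obtain r2 where r2: "strict_mono r2" "\<forall>q<Q. \<exists>l. (\<lambda>n. Yv (r2 n) q) \<longlonglongrightarrow> l"
    using extract_subseq[of Q Yv "\<lambda>q. cball 0 \<bar>R q\<bar>"] Yv_in by auto
  then obtain Xl where Xl: "\<And>q. q < Q \<Longrightarrow> (\<lambda>n. Yv (r2 n) q) \<longlonglongrightarrow> Xl q" by metis
  define r where "r = r1 \<circ> r2"
  have r: "strict_mono r" unfolding r_def using r1(1) r2(1) by (rule strict_mono_o)
  have conv_a: "(\<lambda>n. A (r n) q) \<longlonglongrightarrow> L q" if "q < Q" for q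
    using LIMSEQ_subseq_LIMSEQ[OF L[OF that] r2(1)] unfolding r_def by (simp add: o_def)
  have conv_X: "(\<lambda>n. Xs (r n) q) \<longlonglongrightarrow> Xl q" if qG: "q \<in> G" for q
  proof -
    have q: "q < Q" using that unfolding G_def by auto
    obtain N where N: "\<And>n. n \<ge> N \<Longrightarrow> norm (Xs (r1 n) q) \<le> R q"
      using R[OF qG] unfolding eventually_sequentially by blast
    have "eventually (\<lambda>n. Yv (r2 n) q = Xs (r n) q) sequentially"
      unfolding eventually_sequentially
    proof (intro exI allI impI)
      fix n assume "n \<ge> N"
      then have "r2 n \<ge> N" using seq_suble[OF r2(1), of n] by linarith
      then show "Yv (r2 n) q = Xs (r n) q" using N that unfolding Yv_def r_def by auto
    qed
    then show ?thesis by (rule Lim_transform_eventually[OF Xl[OF q]])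
  qed
  have F_small: "eventually (\<lambda>n. F Q (A (r n)) (Xs (r n)) < v + \<epsilon>) sequentially" if e0: "\<epsilon> > 0" for \<epsilon>
  proof -
    obtain N :: nat where N: "1 / real (Suc N) < \<epsilon>"
      using reals_Archimedean[OF e0] by (auto simp: field_simps)
    show ?thesis unfolding eventually_sequentially
    proof (intro exI allI impI)
      fix n assume "n \<ge> N"
      then have "r n \<ge> N" using seq_suble[OF r, of n] by linarith
      then have "1 / real (Suc (r n)) \<le> 1 / real (Suc N)" by (intro divide_left_mono) auto
      then show "F Q (A (r n)) (Xs (r n)) < v + \<epsilon>" using AX(3)[of "r n"] N by linarith
    qed
  qed
  have lb: "lb_seq (\<lambda>n. F Q (A (r n)) (Xs (r n))) (F Q L Xl)"
  proof -
    have t1: "lb_seq (\<lambda>n. T1 (A (r n) q) (Xs (r n) q)) (T1 (L q) (Xl q))" if "q \<in> {..<Q}" for q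
    proof (cases "L q > 0")
      case True
      then have "q \<in> G" using that unfolding G_def by auto
      show ?thesis by (intro lb_seq_tendsto T1_tendsto conv_a conv_X \<open>q \<in> G\<close>) (use that in auto)
    next
      case False
      then have "L q = 0" using L_nonneg[of q] that by auto
      then have "T1 (L q) (Xl q) = 0" unfolding T1_def by simp
      moreover have "lb_seq (\<lambda>n. T1 (A (r n) q) (Xs (r n) q)) 0"
        by (rule T1_bad) (use conv_a[of q] that \<open>L q = 0\<close> AX(1) in auto)
      ultimately show ?thesis by simp
    qed
    have t2: "lb_seq (\<lambda>n. A (r n) p * A (r n) q * K (Xs (r n) p) (Xs (r n) q)) (L p * L q * K (Xl p) (Xl q))"
      if "p \<in> {..<Q}" "q \<in> {..<Q} - {p}" for p q
    proof (cases "p \<in> G \<and> q \<in> G")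
      case True
      then show ?thesis by (intro lb_seq_tendsto tendsto_intros tendsto_K conv_a conv_X) (use that in auto)
    next
      case False
      then have "L p * L q = 0" using L_nonneg[of p] L_nonneg[of q] that unfolding G_def by auto
      then show ?thesis by (intro cross_bad conv_a) (use that AX(1) in auto)
    qed
    have s1: "lb_seq (\<lambda>n. \<Sum>q<Q. T1 (A (r n) q) (Xs (r n) q)) (\<Sum>q<Q. T1 (L q) (Xl q))"
      by (rule lb_seq_sum) (auto intro: t1)
    have s2: "lb_seq (\<lambda>n. \<Sum>p<Q. \<Sum>q\<in>{..<Q}-{p}. A (r n) p * A (r n) q * K (Xs (r n) p) (Xs (r n) q))
        (\<Sum>p<Q. \<Sum>q\<in>{..<Q}-{p}. L p * L q * K (Xl p) (Xl q))"
    proof (rule lb_seq_sum)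
      fix p assume "p \<in> {..<Q}"
      then show "lb_seq (\<lambda>n. \<Sum>q\<in>{..<Q}-{p}. A (r n) p * A (r n) q * K (Xs (r n) p) (Xs (r n) q))
        (\<Sum>q\<in>{..<Q}-{p}. L p * L q * K (Xl p) (Xl q))"
        by (intro lb_seq_sum[where a="\<lambda>q n. A (r n) p * A (r n) q * K (Xs (r n) p) (Xs (r n) q)"] t2) auto
    qed auto
    show ?thesis unfolding F_split by (rule lb_seq_add[OF s1 s2])
  qed
  have Fv: "F Q L Xl \<le> v" by (rule lb_seq_le[OF lb F_small])
  show ?thesis
  proof (intro exI conjI)
    show "\<forall>q<Q. L q \<ge> 0" using L_nonneg by auto
    show "(\<Sum>q<Q. L q) = m" by (rule L_sum)
    show "\<forall>\<beta> Y. (\<forall>q<Q. \<beta> q \<ge> 0) \<and> (\<Sum>q<Q. \<beta> q) = m \<longrightarrow> F Q L Xl \<le> F Q \<beta> Y"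
    proof (intro allI impI)
    fix \<beta> Y assume H: "(\<forall>q<Q. \<beta> q \<ge> 0) \<and> (\<Sum>q<Q. \<beta> q) = m"
    have "v \<le> F Q \<beta> Y" using H v_le by blast
    then show "F Q L Xl \<le> F Q \<beta> Y" using \<open>F Q L Xl \<le> v\<close> by linarith
    qed
  qed
qed

end

lemma quad_cs:
  fixes a b d :: real
  assumes H: "\<And>s t. 0 \<le> s\<^sup>2 * a + 2 * s * t * b + t\<^sup>2 * d"
  shows "b\<^sup>2 \<le> a * d"
proof (cases "d > 0")
  case True
  have "0 \<le> d\<^sup>2 * a + 2 * d * (-b) * b + (-b)\<^sup>2 * d" by (rule H)
  then have "0 \<le> d * (a * d - b\<^sup>2)" by (simp add: power2_eq_square algebra_simps)
  then have "0 \<le> a * d - b\<^sup>2" using True by (simp add: zero_le_mult_iff)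
  then show ?thesis by simp
next
  case False
  have "0 \<le> 0\<^sup>2 * a + 2 * 0 * 1 * b + 1\<^sup>2 * d" by (rule H)
  then have d: "d = 0" using False by simp
  show ?thesis
  proof (cases "b = 0")
    case True then show ?thesis using d by simp
  next
    case False
    have "0 \<le> 1\<^sup>2 * a + 2 * 1 * (-(a+1)/(2*b)) * b + (-(a+1)/(2*b))\<^sup>2 * d" by (rule H)
    then have "0 \<le> a - (a + 1)" using False d by (simp add: field_simps)
    then show ?thesis by simp
  qed
qed

lemma kz_formula:
  assumes "\<forall>x y. h x y = k x x + k y y - 2 * k x y"
  shows "kz h z0 x y = k x y - k x z0 - k y z0 + k z0 z0"
  using assms unfolding kz_def by (simp add: field_simps)

lemma pd_quad:
  assumes pd: "pos_def_kernel k" and hk: "\<forall>x y. h x y = k x x + k y y - 2 * k x y"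
  shows "0 \<le> s\<^sup>2 * kz h z0 x x + 2 * s * t * kz h z0 x y + t\<^sup>2 * kz h z0 y y"
proof -
  define c where "c = (\<lambda>i::nat. if i = 0 then s else if i = 1 then t else -(s+t))"
  define p where "p = (\<lambda>i::nat. if i = 0 then x else if i = 1 then y else z0)"
  have sym: "\<And>a b. k a b = k b a" using pd unfolding pos_def_kernel_def by blast
  have "0 \<le> (\<Sum>i<3. \<Sum>j<3. c i * c j * k (p i) (p j))"
    using pd unfolding pos_def_kernel_def by blast
  also have "(\<Sum>i<3. \<Sum>j<3. c i * c j * k (p i) (p j)) =
      s\<^sup>2 * kz h z0 x x + 2 * s * t * kz h z0 x y + t\<^sup>2 * kz h z0 y y"
    unfolding kz_formula[OF hk] c_def p_def
    by (simp add: numeral_3_eq_3 sym[of z0 x] sym[of z0 y] sym[of y x] power2_eq_square algebra_simps)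
  finally show ?thesis .
qed

theorem proposition2:
  fixes h k :: "real ^ 'n \<Rightarrow> real ^ 'n \<Rightarrow> real"
    and Q :: nat and z0 :: "real ^ 'n" and \<eta> :: "(real ^ 'n) smeasure" and C_L :: real
  assumes Q: "Q \<ge> 1"
    and h_nonneg: "\<forall>x y. h x y \<ge> 0"
    and h_cnd: "cond_neg_def_kernel h"
    and h_cont: "continuous_on UNIV (\<lambda>(x, y). h x y)"
    and k_pd: "pos_def_kernel k"
    and h_k: "\<forall>x y. h x y = k x x + k y y - 2 * k x y"
    and k_diag: "filterlim (\<lambda>x. k x x) at_top at_infinity"
    and k_bdd: "\<forall>y. \<exists>b. \<forall>x. \<bar>k x y\<bar> \<le> b"
    and k_lower: "\<forall>x y. k x y \<ge> C_L"
    and \<eta>_meas: "smeasure \<eta>"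
    and \<eta>_emb: "in_embedding h z0 \<eta>"
    and \<eta>_mass: "smass \<eta> > 0"
  shows "\<exists>\<alpha> X. (\<forall>q<Q. \<alpha> q \<ge> 0) \<and> (\<Sum>q<Q. \<alpha> q) = smass \<eta> \<and>
     (\<forall>\<beta> Y. (\<forall>q<Q. \<beta> q \<ge> 0) \<and> (\<Sum>q<Q. \<beta> q) = smass \<eta> \<longrightarrow>
        dist2 h z0 (dirac_comb Q \<alpha> X) \<eta> \<le> dist2 h z0 (dirac_comb Q \<beta> Y) \<eta>)"
proof -
  define K where "K = kz h z0"
  have Kf: "K x y = k x y - k x z0 - k y z0 + k z0 z0" for x y
    unfolding K_def by (rule kz_formula[OF h_k])
  have ksym: "k a b = k b a" for a b using k_pd unfolding pos_def_kernel_def by blast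
  obtain b0 where b0: "\<And>x. \<bar>k x z0\<bar> \<le> b0" using k_bdd by metis
  have hxx: "h x x = 0" for x using h_k by simp
  have Kdiag: "K x x = h x z0" for x unfolding K_def kz_def using hxx by simp
  have cont: "continuous_on UNIV (\<lambda>(x, y). K x y)"
  proof -
    have hc: "continuous_on UNIV (\<lambda>p. h (fst p) (snd p))" using h_cont by (simp add: case_prod_beta')
    have c1: "continuous_on UNIV (\<lambda>p::(real^'n) \<times> (real^'n). h (fst p) z0)"
    proof -
      have "continuous_on UNIV (\<lambda>p::(real^'n) \<times> (real^'n). (fst p, z0))" by (intro continuous_intros)
      from continuous_on_compose2[OF hc this subset_UNIV] show ?thesis by simp
    qed
    have c2: "continuous_on UNIV (\<lambda>p::(real^'n) \<times> (real^'n). h (snd p) z0)"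
    proof -
      have "continuous_on UNIV (\<lambda>p::(real^'n) \<times> (real^'n). (snd p, z0))" by (intro continuous_intros)
      from continuous_on_compose2[OF hc this subset_UNIV] show ?thesis by simp
    qed
    have "continuous_on UNIV (\<lambda>p::(real^'n) \<times> (real^'n). (h (fst p) z0 + h (snd p) z0 - h (fst p) (snd p)) / 2)"
      by (intro continuous_intros c1 c2 hc) auto
    then show ?thesis unfolding K_def kz_def by (simp add: case_prod_beta')
  qed
  have diag: "K x x \<ge> 0" for x using Kdiag h_nonneg by simp
  have cs: "(K x y)\<^sup>2 \<le> K x x * K y y" for x y
    by (rule quad_cs) (unfold K_def, rule pd_quad[OF k_pd h_k])
  have bdd: "\<exists>b. \<forall>x. \<bar>K x y\<bar> \<le> b" for y
  proof -
    obtain bY where bY: "\<And>x. \<bar>k x y\<bar> \<le> bY" using k_bdd by metis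
    have "\<bar>K x y\<bar> \<le> bY + b0 + \<bar>k y z0\<bar> + \<bar>k z0 z0\<bar>" for x
      using bY[of x] b0[of x] unfolding Kf by linarith
    then show ?thesis by blast
  qed
  have diag_lim: "filterlim (\<lambda>x. K x x) at_top at_infinity"
    unfolding filterlim_at_top
  proof
    fix Z
    have "eventually (\<lambda>x. Z + 2 * b0 + \<bar>k z0 z0\<bar> \<le> k x x) at_infinity"
      using k_diag unfolding filterlim_at_top by blast
    then show "eventually (\<lambda>x. Z \<le> K x x) at_infinity"
    proof eventually_elim
      case (elim x)
      then show ?case using b0[of x] unfolding Kf by linarith
    qed
  qed
  have lower: "K x y \<ge> 2 * C_L - 2 * b0" for x y
    using k_lower b0[of x] b0[of y] unfolding Kf by (smt (verit))
  interpret kern K using cont diag cs bdd diag_lim by unfold_locales auto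
  define P where "P = fst \<eta>"
  define M where "M = snd \<eta>"
  have P: "sets P = sets borel" "finite_measure P" "integrable P (\<lambda>y. sqrt (K y y))"
    using \<eta>_meas \<eta>_emb unfolding smeasure_def in_embedding_def P_def K_def by auto
  have M: "sets M = sets borel" "finite_measure M" "integrable M (\<lambda>y. sqrt (K y y))"
    using \<eta>_meas \<eta>_emb unfolding smeasure_def in_embedding_def M_def K_def by auto
  define g where "g x = gN P x - gN M x" for x
  define c where "c = cN P + cN M"
  have g_cont: "continuous_on UNIV g"
    unfolding g_def by (intro continuous_on_diff gN_cont P M)
  have g_bound: "\<bar>g x\<bar> \<le> sqrt (K x x) * c" for x
    using gN_bound[OF P(1,3), of x] gN_bound[OF M(1,3), of x] unfolding g_def c_def
    by (simp add: distrib_left)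
  have c_nonneg: "c \<ge> 0" unfolding c_def using cN_nonneg[OF P(1,3)] cN_nonneg[OF M(1,3)] by simp
  have g_small: "\<exists>R. \<forall>x. norm x \<ge> R \<longrightarrow> \<bar>g x\<bar> \<le> \<epsilon> * sqrt (K x x)" if e: "\<epsilon> > 0" for \<epsilon>
  proof -
    obtain R1 where R1: "\<And>x. norm x \<ge> R1 \<Longrightarrow> \<bar>gN P x\<bar> \<le> \<epsilon>/2 * sqrt (K x x)"
      using gN_small[OF P(1,3), of "\<epsilon>/2"] e by auto
    obtain R2 where R2: "\<And>x. norm x \<ge> R2 \<Longrightarrow> \<bar>gN M x\<bar> \<le> \<epsilon>/2 * sqrt (K x x)"
      using gN_small[OF M(1,3), of "\<epsilon>/2"] e by auto
    have "\<bar>g x\<bar> \<le> \<epsilon> * sqrt (K x x)" if "norm x \<ge> max R1 R2" for x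
      using R1[of x] R2[of x] that unfolding g_def by auto
    then show ?thesis by blast
  qed
  interpret kern2 K "2 * C_L - 2 * b0" c g
    by unfold_locales (use lower g_cont g_bound c_nonneg g_small in auto)
  have dist_eq: "dist2 h z0 (dirac_comb Q \<beta> Y) \<eta> = F Q \<beta> Y + sinner K \<eta> \<eta>"
    if \<beta>: "\<forall>q<Q. \<beta> q \<ge> 0" for \<beta> Y
  proof -
    define D where "D = fst (dirac_comb Q \<beta> Y)"
    have sndD: "snd (dirac_comb Q \<beta> Y) = null_measure borel" by (simp add: dirac_comb_def)
    have eta: "\<eta> = (P, M)" unfolding P_def M_def by simp
    have intD: "(\<integral>x. f x \<partial>D) = (\<Sum>q<Q. \<beta> q * f (Y q))" if "continuous_on UNIV f" for f
      unfolding D_def by (rule dirac_comb_integral[OF \<beta> borel_measurable_continuous_onI[OF that]])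
    have DD: "dbl_int K D D = (\<Sum>p<Q. \<Sum>q<Q. \<beta> p * \<beta> q * K (Y p) (Y q))"
    proof -
      have "dbl_int K D D = (\<integral>x. (\<Sum>q<Q. \<beta> q * K x (Y q)) \<partial>D)"
        unfolding dbl_int_def by (simp only: intD[OF cont_K1])
      also have "\<dots> = (\<Sum>p<Q. \<beta> p * (\<Sum>q<Q. \<beta> q * K (Y p) (Y q)))"
        by (intro intD continuous_intros cont_K2)
      finally show ?thesis by (simp add: sum_distrib_left mult.assoc)
    qed
    have DN: "dbl_int K D (null_measure borel) = 0" unfolding dbl_int_def by simp
    have ND: "dbl_int K (null_measure borel) N = 0" for N unfolding dbl_int_def by simp
    have DP: "dbl_int K D N = (\<Sum>q<Q. \<beta> q * gN N (Y q))"
      if "sets N = sets borel" "integrable N (\<lambda>y. sqrt (K y y))" for N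
      unfolding dbl_int_def gN_def[symmetric] by (intro intD gN_cont that)
    have "sinner K (dirac_comb Q \<beta> Y) (dirac_comb Q \<beta> Y) = (\<Sum>p<Q. \<Sum>q<Q. \<beta> p * \<beta> q * K (Y p) (Y q))"
      unfolding sinner_def D_def[symmetric] sndD using DD DN ND by simp
    moreover have "sinner K (dirac_comb Q \<beta> Y) \<eta> = (\<Sum>q<Q. \<beta> q * gN P (Y q)) - (\<Sum>q<Q. \<beta> q * gN M (Y q))"
      unfolding sinner_def D_def[symmetric] sndD eta using DP[OF P(1,3)] DP[OF M(1,3)] ND by simp
    moreover have "(\<Sum>q<Q. \<beta> q * g (Y q)) = (\<Sum>q<Q. \<beta> q * gN P (Y q)) - (\<Sum>q<Q. \<beta> q * gN M (Y q))"
      unfolding g_def by (simp add: right_diff_distrib sum_subtractf)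
    ultimately show ?thesis unfolding dist2_def F_def K_def[symmetric] by simp
  qed
  obtain \<alpha> X where aX: "\<forall>q<Q. \<alpha> q \<ge> 0" "(\<Sum>q<Q. \<alpha> q) = smass \<eta>"
    "\<forall>\<beta> Y. (\<forall>q<Q. \<beta> q \<ge> 0) \<and> (\<Sum>q<Q. \<beta> q) = smass \<eta> \<longrightarrow> F Q \<alpha> X \<le> F Q \<beta> Y"
    using exists_min[OF Q, of "smass \<eta>"] \<eta>_mass by auto
  show ?thesis
  proof (intro exI conjI)
    show "\<forall>q<Q. \<alpha> q \<ge> 0" "(\<Sum>q<Q. \<alpha> q) = smass \<eta>" using aX by auto
    show "\<forall>\<beta> Y. (\<forall>q<Q. \<beta> q \<ge> 0) \<and> (\<Sum>q<Q. \<beta> q) = smass \<eta> \<longrightarrow>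
        dist2 h z0 (dirac_comb Q \<alpha> X) \<eta> \<le> dist2 h z0 (dirac_comb Q \<beta> Y) \<eta>"
    proof (intro allI impI)
      fix \<beta> Y assume H: "(\<forall>q<Q. \<beta> q \<ge> 0) \<and> (\<Sum>q<Q. \<beta> q) = smass \<eta>"
      then have "F Q \<alpha> X \<le> F Q \<beta> Y" using aX(3) by blast
      then show "dist2 h z0 (dirac_comb Q \<alpha> X) \<eta> \<le> dist2 h z0 (dirac_comb Q \<beta> Y) \<eta>"
        using dist_eq[OF aX(1), of X] dist_eq[of \<beta> Y] H by simp
    qed
  qed
qed

end
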